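(* Let $n\ge 3$ and let $P(G(n))$ be the power graph of the gyrogroup $G(n)$ (defined in the context). Then $Int(P(G(n)))=Ce(P(G(n)))$ and $Cl(P(G(n)))=P(G(n))$.
   Context: Let $n\ge 3$ be an integer and $m=2^{n-1}$. Let $P(n)=\{0,1,\dots,m-1\}$, $H(n)=\{m,m+1,\dots,2^n-1\}$ and $G(n)=P(n)\cup H(n)$. For $i,j\in G(n)$ let $t,s,k\in P(n)$ be the residues modulo $m$ (taken in $\{0,\dots,m-1\}$) of $i+j$, $i+(\frac m2-1)j$ and $(\frac m2+1)i+(\frac m2-1)j$, respectively, and define $i\oplus j=t$ if $i,j\in P(n)$; $i\oplus j=t+m$ if $i\in P(n),j\in H(n)$; $i\oplus j=s+m$ if $i\in H(n),j\in P(n)$; $i\oplus j=k$ if $i,j\in H(n)$. Then $(G(n),\oplus)$ is a gyrogroup with identity $e=0$. Powers are defined by $a^1=a$, $a^{k+1}=a^k\oplus a$. The power graph $P(G(n))$ is the simple undirected graph with vertex set $G(n)$ in which distinct vertices $u,v$ are adjacent if and only if $u^k=v$ or $v^k=u$ for some positive integer $k$. In a connected graph $G$: a vertex $v$ is a center vertex if its eccentricity equals the radius of $G$, and the center $Ce(G)$ is the subgraph induced by the center vertices; a vertex $v$ is an interior vertex if for every vertex $u\ne v$ there is a vertex $w$ with $d(u,w)=d(u,v)+d(v,w)$, and the interior $Int(G)$ is the subgraph induced by the interior vertices. For a graph $G$ of order $N$, the closure $Cl(G)$ is obtained by repeatedly adding an edge between non-adjacent vertices whose degree sum is at least $N$ until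 no such pair remains. *)

theory Defs
  imports Main
begin

definition gm :: "nat \<Rightarrow> nat" where "gm n = 2 ^ (n - 1)"

definition carrierG :: "nat \<Rightarrow> nat set" where "carrierG n = {0..<2 ^ n}"

definition goplus :: "nat \<Rightarrow> nat \<Rightarrow> nat \<Rightarrow> nat" where
  "goplus n i j =
     (let m = gm n;
          t = (i + j) mod m;
          s = (i + (m div 2 - 1) * j) mod m;
          k = ((m div 2 + 1) * i + (m div 2 - 1) * j) mod m
      in if i < m \<and> j < m then t
         else if i < m \<and> m \<le> j then t + m
         else if m \<le> i \<and> j < m then s + m
         else k)"

text \<open>Powers: a^1 = a, a^(k+1) = a^k \<oplus> a (the value at exponent 0 is irrelevant).\<close>
fun gpow :: "nat \<Rightarrow> nat \<Rightarrow> nat \<Rightarrow> nat" where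
  "gpow n a 0 = 0"
| "gpow n a (Suc 0) = a"
| "gpow n a (Suc (Suc k)) = goplus n (gpow n a (Suc k)) a"

definition power_graph_edges :: "nat \<Rightarrow> (nat \<times> nat) set" where
  "power_graph_edges n = {(u, v). u \<in> carrierG n \<and> v \<in> carrierG n \<and> u \<noteq> v \<and>
      (\<exists>k>0. gpow n u k = v \<or> gpow n v k = u)}"

definition gdist :: "'a set \<Rightarrow> ('a \<times> 'a) set \<Rightarrow> 'a \<Rightarrow> 'a \<Rightarrow> nat" where
  "gdist V E u v = (LEAST k. (u, v) \<in> (E \<inter> V \<times> V) ^^ k)"

definition ecc :: "'a set \<Rightarrow> ('a \<times> 'a) set \<Rightarrow> 'a \<Rightarrow> nat" where
  "ecc V E v = Max ((gdist V E v) ` V)"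

definition radius :: "'a set \<Rightarrow> ('a \<times> 'a) set \<Rightarrow> nat" where
  "radius V E = Min ((ecc V E) ` V)"

definition center_vertices :: "'a set \<Rightarrow> ('a \<times> 'a) set \<Rightarrow> 'a set" where
  "center_vertices V E = {v \<in> V. ecc V E v = radius V E}"

definition interior_vertices :: "'a set \<Rightarrow> ('a \<times> 'a) set \<Rightarrow> 'a set" where
  "interior_vertices V E = {v \<in> V. \<forall>u\<in>V. u \<noteq> v \<longrightarrow>
      (\<exists>w\<in>V. w \<noteq> v \<and> gdist V E u w = gdist V E u v + gdist V E v w)}"

definition induced_subgraph :: "'a set \<Rightarrow> ('a \<times> 'a) set \<Rightarrow> 'a set \<times> ('a \<times> 'a) set" where
  "induced_subgraph S E = (S, E \<inter> S \<times> S)"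

definition Ce :: "'a set \<Rightarrow> ('a \<times> 'a) set \<Rightarrow> 'a set \<times> ('a \<times> 'a) set" where
  "Ce V E = induced_subgraph (center_vertices V E) E"

definition Int_graph :: "'a set \<Rightarrow> ('a \<times> 'a) set \<Rightarrow> 'a set \<times> ('a \<times> 'a) set" where
  "Int_graph V E = induced_subgraph (interior_vertices V E) E"

definition gdeg :: "'a set \<Rightarrow> ('a \<times> 'a) set \<Rightarrow> 'a \<Rightarrow> nat" where
  "gdeg V E u = card {w \<in> V. (u, w) \<in> E}"

definition closure_step :: "'a set \<Rightarrow> ('a \<times> 'a) set \<Rightarrow> ('a \<times> 'a) set \<Rightarrow> bool" where
  "closure_step V F F' \<longleftrightarrow> (\<exists>u\<in>V. \<exists>v\<in>V. u \<noteq> v \<and> (u, v) \<notin> F \<and>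
      gdeg V F u + gdeg V F v \<ge> card V \<and> F' = F \<union> {(u, v), (v, u)})"

definition is_closure :: "'a set \<Rightarrow> ('a \<times> 'a) set \<Rightarrow> ('a \<times> 'a) set \<Rightarrow> bool" where
  "is_closure V E F \<longleftrightarrow> (E, F) \<in> {(A, B). closure_step V A B}\<^sup>* \<and> \<not> (\<exists>F'. closure_step V F F')"

end

theory Submission
  imports Defs
begin

lemma gm_props:
  assumes "n \<ge> 3"
  shows "gm n \<ge> 4" "gm n div 2 * 2 = gm n" "(2::nat) ^ n = 2 * gm n"
proof -
  have n: "n = Suc (n - 1)" using assms by simp
  have "(2::nat) ^ 2 \<le> 2 ^ (n - 1)" using assms by (intro power_increasing) auto
  then show "gm n \<ge> 4" by (simp add: gm_def)
  have "n - 1 = Suc (n - 2)" using assms by simp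
  then show "gm n div 2 * 2 = gm n" by (simp add: gm_def)
  show "(2::nat) ^ n = 2 * gm n" unfolding gm_def by (subst n) simp
qed

lemma carrier_eq: "n \<ge> 3 \<Longrightarrow> carrierG n = {0..<2 * gm n}"
  using gm_props(3) by (simp add: carrierG_def)

lemma pow_P:
  assumes "n \<ge> 3" "a < gm n"
  shows "gpow n a (Suc k) = (Suc k * a) mod gm n"
proof (induction k)
  case 0
  then show ?case using assms by simp
next
  case (Suc k)
  have m: "gm n > 0" using gm_props(1)[OF assms(1)] by simp
  have "gpow n a (Suc (Suc k)) = goplus n ((Suc k * a) mod gm n) a"
    using Suc by simp
  also have "\<dots> = ((Suc k * a) mod gm n + a) mod gm n"
    using m assms(2) by (simp add: goplus_def Let_def)
  also have "\<dots> = (Suc (Suc k) * a) mod gm n"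
    using mod_add_left_eq[of "Suc k * a" "gm n" a]
    by (simp only: mult_Suc add.commute)
  finally show ?case .
qed

lemma pow_P_lt:
  assumes "n \<ge> 3" "a < gm n" "k > 0"
  shows "gpow n a k < gm n"
proof -
  obtain j where "k = Suc j" using assms(3) by (cases k) auto
  then show ?thesis using pow_P[OF assms(1,2)] gm_props(1)[OF assms(1)] by simp
qed

lemma pow_P_zero:
  assumes "n \<ge> 3" "a < gm n"
  shows "gpow n a (gm n) = 0"
proof -
  have "gm n = Suc (gm n - 1)" using gm_props(1)[OF assms(1)] by simp
  then have "gpow n a (gm n) = (gm n * a) mod gm n"
    using pow_P[OF assms, of "gm n - 1"] by metis
  then show ?thesis by simp
qed

lemma goplus_hh:
  assumes "n \<ge> 3" "gm n \<le> h"
  shows "goplus n h h = 0"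
proof -
  let ?m = "gm n"
  have d: "?m div 2 \<ge> 1" using gm_props(1)[OF assms(1)] by simp
  have "(?m div 2 + 1) * h + (?m div 2 - 1) * h = (?m div 2 + 1 + (?m div 2 - 1)) * h"
    by (simp add: distrib_right)
  also have "?m div 2 + 1 + (?m div 2 - 1) = ?m" using d gm_props(2)[OF assms(1)] by linarith
  finally have "((?m div 2 + 1) * h + (?m div 2 - 1) * h) mod ?m = 0" by simp
  then show ?thesis using assms(2) by (simp add: goplus_def Let_def)
qed

lemma goplus_0h:
  assumes "n \<ge> 3" "gm n \<le> h" "h < 2 * gm n"
  shows "goplus n 0 h = h"
proof -
  have m: "gm n > 0" using gm_props(1)[OF assms(1)] by simp
  have "h mod gm n = h - gm n" using assms(2,3)
    using le_mod_geq[of "gm n" h] by simp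
  then show ?thesis using m assms by (simp add: goplus_def Let_def)
qed

lemma pow_H:
  assumes "n \<ge> 3" "gm n \<le> h" "h < 2 * gm n"
  shows "gpow n h (Suc k) \<in> {0, h}"
proof (induction k)
  case 0
  then show ?case by simp
next
  case (Suc k)
  then show ?case using goplus_hh[OF assms(1,2)] goplus_0h[OF assms] by auto
qed

lemma pow_H2:
  assumes "n \<ge> 3" "gm n \<le> h"
  shows "gpow n h 2 = 0"
  using goplus_hh[OF assms] by (simp add: numeral_2_eq_2)

lemma E_sym: "(u, v) \<in> power_graph_edges n \<Longrightarrow> (v, u) \<in> power_graph_edges n"
  unfolding power_graph_edges_def by blast

lemma E_sub: "(u, v) \<in> power_graph_edges n \<Longrightarrow> u \<in> carrierG n \<and> v \<in> carrierG n \<and> u \<noteq> v"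
  unfolding power_graph_edges_def by blast

lemma E_0:
  assumes "n \<ge> 3" "v \<in> carrierG n" "v \<noteq> 0"
  shows "(v, 0) \<in> power_graph_edges n"
proof -
  have V: "v < 2 * gm n" using assms carrier_eq by auto
  have z: "0 \<in> carrierG n" using assms carrier_eq by auto
  have "\<exists>k>0. gpow n v k = 0"
  proof (cases "v < gm n")
    case True
    then show ?thesis using pow_P_zero[OF assms(1) True] gm_props(1)[OF assms(1)]
      by (intro exI[of _ "gm n"]) auto
  next
    case False
    then show ?thesis using pow_H2[OF assms(1)] by (intro exI[of _ 2]) auto
  qed
  then show ?thesis using assms z unfolding power_graph_edges_def by auto
qed

lemma E_H:
  assumes "n \<ge> 3" "gm n \<le> h" "(h, v) \<in> power_graph_edges n"
  shows "v = 0"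
proof -
  have hv: "h \<in> carrierG n" "v \<in> carrierG n" "h \<noteq> v" using E_sub[OF assms(3)] by auto
  have h2: "h < 2 * gm n" using hv carrier_eq[OF assms(1)] by auto
  have v2: "v < 2 * gm n" using hv carrier_eq[OF assms(1)] by auto
  obtain k where k: "k > 0" "gpow n h k = v \<or> gpow n v k = h"
    using assms(3) unfolding power_graph_edges_def by auto
  obtain j where j: "k = Suc j" using k(1) by (cases k) auto
  show ?thesis
  proof (cases "gpow n h k = v")
    case True
    then show ?thesis using pow_H[OF assms(1,2) h2, of j] j hv by auto
  next
    case False
    then have e: "gpow n v k = h" using k by auto
    show ?thesis
    proof (cases "v < gm n")
      case True
      then show ?thesis using pow_P_lt[OF assms(1) True k(1)] e assms(2) by auto
    next
      case False
      then have "gpow n v (Suc j) \<in> {0, v}" using pow_H[OF assms(1) _ v2] by auto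
      then show ?thesis using e j hv gm_props(1)[OF assms(1)] assms(2) by auto
    qed
  qed
qed

lemma E_P:
  assumes "n \<ge> 3" "p < gm n" "p \<noteq> 0" "(p, v) \<in> power_graph_edges n"
  shows "v < gm n"
proof (rule ccontr)
  assume "\<not> v < gm n"
  then have "p = 0" using E_H[OF assms(1) _ E_sym[OF assms(4)]] by auto
  then show False using assms(3) by simp
qed


lemma E_inter: "power_graph_edges n \<inter> carrierG n \<times> carrierG n = power_graph_edges n"
  using E_sub by auto

lemma gdist_eq:
  assumes "n \<ge> 3" "u \<in> carrierG n" "v \<in> carrierG n"
  shows "gdist (carrierG n) (power_graph_edges n) u v =
    (if u = v then 0 else if (u, v) \<in> power_graph_edges n then 1 else 2)"
proof -
  let ?E = "power_graph_edges n"
  have g: "gdist (carrierG n) ?E u v = (LEAST k. (u, v) \<in> ?E ^^ k)"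
    unfolding gdist_def E_inter ..
  show ?thesis
  proof (cases "u = v")
    case True
    then show ?thesis unfolding g by (intro Least_equality) auto
  next
    case uv: False
    show ?thesis
    proof (cases "(u, v) \<in> ?E")
      case True
      moreover have "k \<ge> 1" if "(u, v) \<in> ?E ^^ k" for k
        using that uv by (cases k) auto
      ultimately show ?thesis unfolding g using uv
        by (intro Least_equality) auto
    next
      case False
      have u0: "u \<noteq> 0"
      proof
        assume "u = 0"
        then show False using uv False E_0[OF assms(1) assms(3)] E_sym by auto
      qed
      have v0: "v \<noteq> 0"
      proof
        assume "v = 0"
        then show False using uv False E_0[OF assms(1) assms(2)] by auto
      qed
      have "(u, 0) \<in> ?E" "(0, v) \<in> ?E" using E_0[OF assms(1)] E_sym assms u0 v0 by blast+
      then have "(u, v) \<in> ?E ^^ 2" by (auto simp: numeral_2_eq_2)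
      moreover have "k \<ge> 2" if "(u, v) \<in> ?E ^^ k" for k
      proof (rule ccontr)
        assume "\<not> k \<ge> 2"
        then have "k = 0 \<or> k = 1" by auto
        then show False using that uv False by auto
      qed
      ultimately show ?thesis unfolding g using uv False
        by (intro Least_equality) auto
    qed
  qed
qed

lemma other_H:
  assumes "n \<ge> 3" "v \<in> carrierG n"
  obtains w where "w \<in> carrierG n" "w \<noteq> v" "w \<noteq> 0" "gm n \<le> w"
proof -
  have m: "gm n \<ge> 4" using gm_props(1)[OF assms(1)] .
  show ?thesis
  proof (cases "v = gm n")
    case True
    then show ?thesis using that[of "gm n + 1"] m carrier_eq[OF assms(1)] by auto
  next
    case False
    then show ?thesis using that[of "gm n"] m carrier_eq[OF assms(1)] by auto
  qed
qed

lemma not_adj: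
  assumes "n \<ge> 3" "v \<noteq> 0" "gm n \<le> w"
  shows "(v, w) \<notin> power_graph_edges n"
  using E_H[OF assms(1,3)] E_sym assms(2) by blast

lemma finV: "finite (carrierG n)" by (simp add: carrierG_def)

lemma ecc_0:
  assumes "n \<ge> 3"
  shows "ecc (carrierG n) (power_graph_edges n) 0 = 1"
proof -
  have z: "0 \<in> carrierG n" using carrier_eq[OF assms] gm_props(1)[OF assms] by auto
  obtain w where w: "w \<in> carrierG n" "w \<noteq> 0" using other_H[OF assms z] by metis
  show ?thesis unfolding ecc_def
  proof (rule Max_eqI)
    show "finite (gdist (carrierG n) (power_graph_edges n) 0 ` carrierG n)" using finV by simp
    show "y \<le> 1" if "y \<in> gdist (carrierG n) (power_graph_edges n) 0 ` carrierG n" for y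
      using that gdist_eq[OF assms z] E_0[OF assms] E_sym by auto
    show "1 \<in> gdist (carrierG n) (power_graph_edges n) 0 ` carrierG n"
      using w gdist_eq[OF assms z w(1)] E_0[OF assms w(1,2)] E_sym
      by (intro image_eqI[of _ _ w]) auto
  qed
qed

lemma ecc_other:
  assumes "n \<ge> 3" "v \<in> carrierG n" "v \<noteq> 0"
  shows "ecc (carrierG n) (power_graph_edges n) v = 2"
proof -
  obtain w where w: "w \<in> carrierG n" "w \<noteq> v" "w \<noteq> 0" "gm n \<le> w"
    using other_H[OF assms(1,2)] by metis
  show ?thesis unfolding ecc_def
  proof (rule Max_eqI)
    show "finite (gdist (carrierG n) (power_graph_edges n) v ` carrierG n)" using finV by simp
    show "y \<le> 2" if "y \<in> gdist (carrierG n) (power_graph_edges n) v ` carrierG n" for y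
      using that gdist_eq[OF assms(1,2)] by auto
    show "2 \<in> gdist (carrierG n) (power_graph_edges n) v ` carrierG n"
      using w gdist_eq[OF assms(1,2) w(1)] not_adj[OF assms(1,3) w(4)]
      by (intro image_eqI[of _ _ w]) auto
  qed
qed

lemma radius_eq:
  assumes "n \<ge> 3"
  shows "radius (carrierG n) (power_graph_edges n) = 1"
proof -
  have z: "0 \<in> carrierG n" using carrier_eq[OF assms] gm_props(1)[OF assms] by auto
  show ?thesis unfolding radius_def
  proof (rule Min_eqI)
    show "finite (ecc (carrierG n) (power_graph_edges n) ` carrierG n)" using finV by simp
    show "1 \<le> y" if yin: "y \<in> ecc (carrierG n) (power_graph_edges n) ` carrierG n" for y
    proof -
      obtain x where x: "x \<in> carrierG n" "y = ecc (carrierG n) (power_graph_edges n) x"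
        using yin by blast
      show ?thesis using x ecc_0[OF assms] ecc_other[OF assms x(1)] by (cases "x = 0") auto
    qed
    show "1 \<in> ecc (carrierG n) (power_graph_edges n) ` carrierG n"
      using z ecc_0[OF assms] by (intro image_eqI[of _ _ 0]) auto
  qed
qed

lemma center_eq:
  assumes "n \<ge> 3"
  shows "center_vertices (carrierG n) (power_graph_edges n) = {0}"
proof -
  have z: "0 \<in> carrierG n" using carrier_eq[OF assms] gm_props(1)[OF assms] by auto
  show ?thesis unfolding center_vertices_def radius_eq[OF assms]
    using z ecc_0[OF assms] ecc_other[OF assms] by force
qed

lemma interior_eq:
  assumes "n \<ge> 3"
  shows "interior_vertices (carrierG n) (power_graph_edges n) = {0}"
proof -
  let ?V = "carrierG n" and ?E = "power_graph_edges n"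
  have z: "0 \<in> ?V" using carrier_eq[OF assms] gm_props(1)[OF assms] by auto
  have "0 \<in> interior_vertices ?V ?E"
    unfolding interior_vertices_def
  proof (intro CollectI conjI ballI impI z)
    fix u assume u: "u \<in> ?V" "u \<noteq> 0"
    obtain w where w: "w \<in> ?V" "w \<noteq> u" "w \<noteq> 0" "gm n \<le> w"
      using other_H[OF assms u(1)] by metis
    have "gdist ?V ?E u w = gdist ?V ?E u 0 + gdist ?V ?E 0 w"
      using gdist_eq[OF assms u(1) w(1)] gdist_eq[OF assms u(1) z] gdist_eq[OF assms z w(1)]
        not_adj[OF assms u(2) w(4)] E_0[OF assms u(1,2)] E_0[OF assms w(1,3)] E_sym[of w 0 n] w u
      by auto
    then show "\<exists>w\<in>?V. w \<noteq> 0 \<and> gdist ?V ?E u w = gdist ?V ?E u 0 + gdist ?V ?E 0 w"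
      using w by blast
  qed
  moreover have "v \<notin> interior_vertices ?V ?E" if v: "v \<noteq> 0" for v
  proof
    assume "v \<in> interior_vertices ?V ?E"
    then have vV: "v \<in> ?V" and "\<exists>w\<in>?V. w \<noteq> v \<and> gdist ?V ?E 0 w = gdist ?V ?E 0 v + gdist ?V ?E v w"
      using z v unfolding interior_vertices_def by auto
    then obtain w where w: "w \<in> ?V" "w \<noteq> v" "gdist ?V ?E 0 w = gdist ?V ?E 0 v + gdist ?V ?E v w"
      by blast
    have "gdist ?V ?E 0 w \<le> 1"
    proof (cases "w = 0")
      case False
      then show ?thesis using gdist_eq[OF assms z w(1)] E_0[OF assms w(1) False] E_sym by auto
    qed (use gdist_eq[OF assms z w(1)] in simp)
    moreover have "gdist ?V ?E 0 v = 1" using gdist_eq[OF assms z vV] E_0[OF assms vV v] E_sym v by auto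
    moreover have "gdist ?V ?E v w \<ge> 1" using gdist_eq[OF assms vV w(1)] w(2) by simp
    ultimately show False using w(3) by linarith
  qed
  moreover have "interior_vertices ?V ?E \<subseteq> ?V" unfolding interior_vertices_def by auto
  ultimately show ?thesis by blast
qed

lemma gdeg_bound:
  assumes "n \<ge> 3" "x \<in> carrierG n" "x \<noteq> 0"
  shows "gdeg (carrierG n) (power_graph_edges n) x \<le> gm n - 1"
proof (cases "x < gm n")
  case True
  have "{w \<in> carrierG n. (x, w) \<in> power_graph_edges n} \<subseteq> {0..<gm n} - {x}"
    using E_P[OF assms(1) True assms(3)] E_sub by auto
  then have "gdeg (carrierG n) (power_graph_edges n) x \<le> card ({0..<gm n} - {x})"
    unfolding gdeg_def by (intro card_mono) auto
  also have "\<dots> = gm n - 1" using True by simp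
  finally show ?thesis .
next
  case False
  have "{w \<in> carrierG n. (x, w) \<in> power_graph_edges n} \<subseteq> {0}"
    using E_H[OF assms(1), of x] False by auto
  then have "gdeg (carrierG n) (power_graph_edges n) x \<le> card {0::nat}"
    unfolding gdeg_def by (intro card_mono) auto
  then show ?thesis using gm_props(1)[OF assms(1)] by simp
qed

lemma no_step:
  assumes "n \<ge> 3"
  shows "\<not> closure_step (carrierG n) (power_graph_edges n) F'"
proof
  assume "closure_step (carrierG n) (power_graph_edges n) F'"
  then obtain u v where uv: "u \<in> carrierG n" "v \<in> carrierG n" "u \<noteq> v"
    "(u, v) \<notin> power_graph_edges n"
    "gdeg (carrierG n) (power_graph_edges n) u + gdeg (carrierG n) (power_graph_edges n) v
      \<ge> card (carrierG n)"
    unfolding closure_step_def by blast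
  have u0: "u \<noteq> 0"
  proof
    assume "u = 0"
    then show False using uv E_0[OF assms uv(2)] E_sym by auto
  qed
  have v0: "v \<noteq> 0"
  proof
    assume "v = 0"
    then show False using uv E_0[OF assms uv(1)] by auto
  qed
  have c: "card (carrierG n) = 2 * gm n" using carrier_eq[OF assms] by simp
  show False using gdeg_bound[OF assms uv(1) u0] gdeg_bound[OF assms uv(2) v0] uv(5) c
    gm_props(1)[OF assms] by linarith
qed

theorem mainTheorem12:
  fixes n :: nat
  assumes "n \<ge> 3"
  shows "Int_graph (carrierG n) (power_graph_edges n) = Ce (carrierG n) (power_graph_edges n)
       \<and> (\<forall>F. is_closure (carrierG n) (power_graph_edges n) F \<longrightarrow> F = power_graph_edges n)"
proof
  show "Int_graph (carrierG n) (power_graph_edges n) = Ce (carrierG n) (power_graph_edges n)"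
    unfolding Int_graph_def Ce_def interior_eq[OF assms] center_eq[OF assms] ..
  show "\<forall>F. is_closure (carrierG n) (power_graph_edges n) F \<longrightarrow> F = power_graph_edges n"
  proof (intro allI impI)
    fix F assume "is_closure (carrierG n) (power_graph_edges n) F"
    then have "(power_graph_edges n, F) \<in> {(A, B). closure_step (carrierG n) A B}\<^sup>*"
      unfolding is_closure_def by blast
    then show "F = power_graph_edges n"
      by (cases rule: converse_rtranclE) (auto simp: no_step[OF assms])
  qed
qed

end
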